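(* Let $n,a,b$ be positive integers with $a<b$. Then $$\int_{a\pi/n}^{b\pi/n}\frac{\sin^2(nt)}{t}\,dt\ \ge\ \frac1{12}\sum_{i=a}^b\frac1i.$$ *)

theory Defs
  imports "HOL-Analysis.Analysis"
begin

end

theory Submission
  imports Defs
begin

lemma sq_int:
  fixes n k :: nat assumes n: "0 < n"
  shows "((\<lambda>t. (sin (real n * t))\<^sup>2) has_integral (pi / (2 * real n))) {real k * pi / real n .. real (Suc k) * pi / real n}"
proof -
  define F where "F t = t/2 - sin (2 * real n * t) / (4 * real n)" for t
  have d: "(F has_real_derivative (sin (real n * t))\<^sup>2) (at t)" for t
  proof -
    have "(F has_real_derivative (1/2 - cos (2 * real n * t) * (2 * real n) / (4 * real n))) (at t)"
      unfolding F_def by (auto intro!: derivative_eq_intros)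
    moreover have "1/2 - cos (2 * real n * t) * (2 * real n) / (4 * real n) = (sin (real n * t))\<^sup>2"
    proof -
      have "cos (2 * real n * t) = 1 - 2 * (sin (real n * t))\<^sup>2"
        using cos_double_sin[of "real n * t"] by (simp add: mult.assoc)
      thus ?thesis using n by (simp add: field_simps)
    qed
    ultimately show ?thesis by simp
  qed
  have e: "sin (2 * real n * (real m * pi / real n)) = 0" for m :: nat
  proof -
    have "2 * real n * (real m * pi / real n) = real (2*m) * pi" using n by simp
    thus ?thesis by (simp only: sin_npi)
  qed
  have "((\<lambda>t. (sin (real n * t))\<^sup>2) has_integral (F (real (Suc k) * pi / real n) - F (real k * pi / real n))) {real k * pi / real n .. real (Suc k) * pi / real n}"
    apply (rule fundamental_theorem_of_calculus)
    using n apply (simp add: field_simps)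
    using d by (metis has_real_derivative_iff_has_vector_derivative has_vector_derivative_at_within)
  moreover have "F (real (Suc k) * pi / real n) - F (real k * pi / real n) = pi / (2 * real n)"
    unfolding F_def using e[of "Suc k"] e[of k] n by (simp add: field_simps)
  ultimately show ?thesis by simp
qed

lemma piece:
  fixes n k :: nat assumes n: "0 < n" and k: "0 < k"
  shows "integral {real k * pi / real n .. real (Suc k) * pi / real n} (\<lambda>t. (sin (real n * t))\<^sup>2 / t) \<ge> 1 / (2 * real (Suc k))"
proof -
  let ?S = "{real k * pi / real n .. real (Suc k) * pi / real n}"
  define c where "c = real n / (real (Suc k) * pi)"
  have pk0: "pi * 2 + pi * (real k * 2) \<noteq> 0" using pi_gt_zero by (smt (verit) mult_nonneg_nonneg of_nat_0_le_iff)
  have p0: "real k * pi / real n > 0" using n k by simp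
  have pos: "\<And>t. t \<in> ?S \<Longrightarrow> t > 0" using p0 by auto
  have ci: "((\<lambda>t. c * (sin (real n * t))\<^sup>2) has_integral (c * (pi / (2 * real n)))) ?S"
    by (rule has_integral_mult_right[OF sq_int[OF n]])
  have cont: "continuous_on ?S (\<lambda>t. (sin (real n * t))\<^sup>2 / t)"
    using pos p0 by (auto intro!: continuous_intros)
  have "c * (pi / (2 * real n)) = integral ?S (\<lambda>t. c * (sin (real n * t))\<^sup>2)"
    using ci by (rule integral_unique[symmetric])
  also have "\<dots> \<le> integral ?S (\<lambda>t. (sin (real n * t))\<^sup>2 / t)"
  proof (rule integral_le)
    show "(\<lambda>t. c * (sin (real n * t))\<^sup>2) integrable_on ?S" using ci by blast
    show "(\<lambda>t. (sin (real n * t))\<^sup>2 / t) integrable_on ?S"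
      using cont integrable_continuous_interval by blast
    fix x assume x: "x \<in> ?S"
    show "c * (sin (real n * x))\<^sup>2 \<le> (sin (real n * x))\<^sup>2 / x"
    proof -
      have "x > 0" using pos x by blast
      have "x \<le> real (Suc k) * pi / real n" using x by simp
      have pk: "0 < pi + pi * real k" by (simp add: add_pos_nonneg)
      hence "c \<le> 1 / x" unfolding c_def using \<open>x > 0\<close> n \<open>x \<le> real (Suc k) * pi / real n\<close>
        by (simp add: field_simps)
      thus "c * (sin (real n * x))\<^sup>2 \<le> (sin (real n * x))\<^sup>2 / x"
        by (metis divide_inverse inverse_eq_divide mult.commute mult_right_mono zero_le_power2)
    qed
  qed
  finally have le: "c * (pi / (2 * real n)) \<le> integral ?S (\<lambda>t. (sin (real n * t))\<^sup>2 / t)" .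
  have "c * (pi / (2 * real n)) = 1 / (2 * real (Suc k))" unfolding c_def using n pk0 by (simp add: field_simps)
  with le show ?thesis by simp
qed

lemma cont_f:
  fixes n x y :: nat assumes n: "0 < n" and x: "0 < x"
  shows "(\<lambda>t. (sin (real n * t))\<^sup>2 / t) integrable_on {real x * pi / real n .. real y * pi / real n}"
proof -
  have p0: "real x * pi / real n > 0" using n x by simp
  have "continuous_on {real x * pi / real n .. real y * pi / real n} (\<lambda>t. (sin (real n * t))\<^sup>2 / t)"
    using p0 by (auto intro!: continuous_intros)
  thus ?thesis using integrable_continuous_interval by blast
qed

lemma partial:
  fixes n a d :: nat assumes n: "0 < n" and a: "0 < a"
  shows "integral {real a * pi / real n .. real (a + d) * pi / real n} (\<lambda>t. (sin (real n * t))\<^sup>2 / t)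
     \<ge> (1/2) * (\<Sum>i=Suc a..a+d. 1 / real i)"
proof (induction d)
  case 0
  then show ?case by simp
next
  case (Suc d)
  let ?f = "\<lambda>t. (sin (real n * t))\<^sup>2 / t"
  have C: "integral {real a * pi / real n .. real (a + d) * pi / real n} ?f
      + integral {real (a + d) * pi / real n .. real (a + Suc d) * pi / real n} ?f
      = integral {real a * pi / real n .. real (a + Suc d) * pi / real n} ?f"
  proof (rule Henstock_Kurzweil_Integration.integral_combine)
    show "real a * pi / real n \<le> real (a + d) * pi / real n"
      using n by (intro divide_right_mono mult_right_mono) auto
    show "real (a + d) * pi / real n \<le> real (a + Suc d) * pi / real n"
      using n by (intro divide_right_mono mult_right_mono) auto
    show "?f integrable_on {real a * pi / real n .. real (a + Suc d) * pi / real n}"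
      by (rule cont_f[OF n a])
  qed
  have P: "integral {real (a + d) * pi / real n .. real (a + Suc d) * pi / real n} ?f \<ge> 1 / (2 * real (a + Suc d))"
    using piece[OF n, of "a + d"] a by simp
  have S: "(\<Sum>i=Suc a..a+Suc d. 1 / real i) = (\<Sum>i=Suc a..a+d. 1 / real i) + 1 / real (a + Suc d)"
    by simp
  have H: "1 / (2 * real (a + Suc d)) = (1/2) * (1 / real (a + Suc d))" by simp
  show ?case unfolding S using C P H Suc.IH by argo
qed

theorem lemma5p7:
  fixes n a b :: nat
  assumes "0 < n" and "0 < a" and "0 < b" and "a < b"
  shows "integral {real a * pi / real n .. real b * pi / real n}
           (\<lambda>t. (sin (real n * t))\<^sup>2 / t)
         \<ge> (1/12) * (\<Sum>i=a..b. 1 / real i)"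
proof -
  define T where "T = (\<Sum>i=Suc a..b. 1 / real i)"
  obtain d where d: "b = a + d" using assms(4) less_imp_add_positive by blast
  have I: "integral {real a * pi / real n .. real b * pi / real n} (\<lambda>t. (sin (real n * t))\<^sup>2 / t) \<ge> T / 2"
    using partial[OF assms(1,2), of d] unfolding T_def d by simp
  have split: "(\<Sum>i=a..b. 1 / real i) = 1 / real a + T"
    unfolding T_def using assms(4) by (simp add: sum.atLeast_Suc_atMost)
  have T1: "T \<ge> 1 / real (Suc a)"
    unfolding T_def by (rule member_le_sum[where f="\<lambda>i. 1 / real i", of "Suc a"]) (use assms(4) in auto)
  have "1 / real a \<le> 2 / real (Suc a)" using assms(2) by (simp add: field_simps)
  hence "1 / real a \<le> 2 * T" using T1 by simp
  moreover have "T \<ge> 0" using T1 by (smt (verit) of_nat_0_le_iff divide_nonneg_nonneg)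
  ultimately show ?thesis using I split T1 by linarith
qed

end
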